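(* Let $m\ge0$ be an integer and $\gamma\ge m+\frac32$, and let $g_{m,\gamma}(x)=(x+1)^m(3-2x)^{-\gamma}$ for $x\in[-1,1]$. Then for all $x\in[-1,1]$, $$I_+^{\gamma-m-3/2}g_{m,\gamma}(x)=\sqrt{\frac\pi5}\,\frac{\Gamma(\gamma-\frac12)}{\Gamma(\gamma)}\,(x+1)^{m+1}(3-2x)^{-(\gamma-1/2)}.$$ In particular, for $\lambda\ge0$ and $\varphi_{2\lambda+3}(\tau)=(3-2\tau)^{-(2\lambda+3)/2}$, $I^\lambda_+\varphi_{2\lambda+3}(x)=\sqrt{\frac\pi5}\frac{\Gamma(\lambda+1)}{\Gamma(\lambda+\frac32)}(x+1)(3-2x)^{-(\lambda+1)}$.
   Context: For $f\in L^1[-1,1]$ and $\mu\ge0$, $I^\mu_+f(x)=(1+x)^{-\mu+1/2}\int_{-1}^x(x-\tau)^{-1/2}(1+\tau)^\mu f(\tau)\,d\tau$. *)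

theory Defs
  imports "HOL-Analysis.Analysis"
begin

definition Iplus :: "real \<Rightarrow> (real \<Rightarrow> real) \<Rightarrow> real \<Rightarrow> real" where
  "Iplus \<mu> f x = (1 + x) powr (- \<mu> + 1/2) *
     (LINT \<tau>:{-1..x}|lborel. (x - \<tau>) powr (-1/2) * (1 + \<tau>) powr \<mu> * f \<tau>)"

definition g_fun :: "nat \<Rightarrow> real \<Rightarrow> real \<Rightarrow> real" where
  "g_fun m \<gamma> x = (x + 1) ^ m * (3 - 2 * x) powr (- \<gamma>)"

definition phi_fun :: "real \<Rightarrow> real \<Rightarrow> real" where
  "phi_fun a \<tau> = (3 - 2 * \<tau>) powr (- a / 2)"

end

theory Submission
  imports Defs
begin

lemma alg:
  fixes cA T Pa Fm X Xm Pm c P2 rr sx Ph :: real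
  assumes "Pa>0" "P2>0" "Pm>0" "Xm>0" "Fm>0" "Ph*Pm=1" "sx*Xm=1" "Fm*5=rr"
  shows "cA * T / Pa * (Fm * X / (Xm * Pm)) * (5*c/P2) = cA * c * rr * sx * (X * T * (Ph / (Pa * P2)))"
proof -
  have "sx = 1/Xm" "Ph = 1/Pm" using assms by (auto simp: field_simps)
  then show ?thesis using assms by (simp add: field_simps)
qed

lemma pt:
  fixes a x t c :: real
  assumes x: "-1 < x" "x \<le> 1" and t: "-1 < t" "t < x" and c: "c = (3-2*x)/(1+x)"
  shows "(c*(1+t)/(3-2*t)) powr (a-1) * (1 - c*(1+t)/(3-2*t)) powr (1/2-1) * (5*c/(3-2*t)^2)
       = (c powr a * sqrt 5 * sqrt (1+x)) * ((x-t) powr (-1/2) * (1+t) powr (a-1) * (3-2*t) powr (-(a+1/2)))"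
proof -
  have p1: "3-2*t > 0" "1+t>0" "x-t>0" "1+x>0" "3-2*x>0" using x t by auto
  have cp: "c > 0" using p1 c by simp
  have e1: "1 - c*(1+t)/(3-2*t) = 5*(x-t)/((1+x)*(3-2*t))"
  proof -
    have n: "(1+x)*(3-2*t) \<noteq> 0" "1+x \<noteq> 0" "3-2*t \<noteq> 0" using p1 by auto
    show ?thesis unfolding c using n by (simp add: field_simps)
  qed
  have A: "(c*(1+t)/(3-2*t)) powr (a-1) = c powr (a-1) * (1+t) powr (a-1) / (3-2*t) powr (a-1)"
    using p1 cp by (simp add: powr_mult powr_divide)
  have B: "(5*(x-t)/((1+x)*(3-2*t))) powr (1/2-1) = 5 powr (-1/2) * (x-t) powr (-1/2) / ((1+x) powr (-1/2) * (3-2*t) powr (-1/2))"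
  proof -
    have "(5*(x-t)/((1+x)*(3-2*t))) powr (1/2-1) = (5*(x-t)) powr (-1/2) / ((1+x)*(3-2*t)) powr (-1/2)"
      using p1 powr_divide[of "5*(x-t)" "(1+x)*(3-2*t)" "-1/2"] by simp
    also have "\<dots> = 5 powr (-1/2) * (x-t) powr (-1/2) / ((1+x) powr (-1/2) * (3-2*t) powr (-1/2))"
      using p1 powr_mult[of 5 "x-t" "-1/2"] powr_mult[of "1+x" "3-2*t" "-1/2"] by simp
    finally show ?thesis .
  qed
  define P where "P = 3-2*t"
  have Pp: "P > 0" using p1 P_def by simp
  have C: "5*c/(3-2*t)^2 = 5 * c / P powr 2"
    using Pp by (simp add: powr_realpow P_def)
  have D1: "c powr (a-1) * c = c powr a" using cp by (simp add: powr_diff)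
  have D2a: "P powr (-(a+1/2)) * P powr (a-1) * P powr 2 = P powr (-(a+1/2) + (a-1) + 2)"
    by (simp only: powr_add)
  have D2b: "-(a+1/2) + (a-1) + 2 = 1/2" by simp
  have D2c: "P powr (1/2) * P powr (-1/2) = 1"
    using Pp by (simp add: powr_add[symmetric])
  have D3: "(1+x) powr (-1/2) * sqrt (1+x) = 1" using p1 by (simp add: powr_half_sqrt[symmetric] powr_add[symmetric])
  have D5: "5 powr (-1/2::real) * 5 = sqrt 5"
  proof -
    have "5 powr (-1/2::real) * 5 powr 1 = 5 powr (-1/2 + 1)" by (simp only: powr_add)
    then show ?thesis by (simp add: powr_half_sqrt)
  qed
  have pos: "P powr (a-1) > 0" "P powr 2 > 0" "P powr (-1/2) > 0" "(1+x) powr (-1/2) > 0" "5 powr (-1/2::real) > 0"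
    using Pp p1 by auto
  define Q where "Q = P powr (-(a+1/2))"
  have Q: "Q * P powr (a-1) * P powr 2 = P powr (1/2)" using D2a D2b Q_def by simp
  have Q': "Q = P powr (1/2) / (P powr (a-1) * P powr 2)" using Q pos by (simp add: field_simps)
  show ?thesis
    unfolding e1 A B C D1[symmetric] unfolding P_def[symmetric] unfolding Q_def[symmetric] unfolding Q'
    apply (rule alg)
    using pos D2c D3 D5 by (auto simp: mult.commute)
qed
lemma core:
  fixes a x :: real assumes a: "a > 0" and x: "-1 < x" "x \<le> 1"
  shows "(LINT t:{-1..x}|lborel. (x-t) powr (-1/2) * (1+t) powr (a-1) * (3-2*t) powr (-(a+1/2)))
     = Beta a (1/2) / (((3-2*x)/(1+x)) powr a * sqrt 5 * sqrt (1+x))"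
proof -
  define c where "c = (3-2*x)/(1+x)"
  have cp: "c > 0" using x unfolding c_def by simp
  define g where "g = (\<lambda>t::real. c*(1+t)/(3-2*t))"
  define g' where "g' = (\<lambda>t::real. 5*c/(3-2*t)^2)"
  define f where "f = (\<lambda>u::real. u powr (a-1) * (1-u) powr (1/2-1))"
  define F where "F = (\<lambda>t. (x-t) powr (-1/2) * (1+t) powr (a-1) * (3-2*t) powr (-(a+1/2)))"
  define K where "K = c powr a * sqrt 5 * sqrt (1+x)"
  have Kp: "K > 0" using cp x unfolding K_def by simp
  have g0: "g (-1) = 0" unfolding g_def by simp
  have g1: "g x = 1"
  proof -
    have "1+x \<noteq> 0" "3-2*x \<noteq> 0" using x by auto
    then show ?thesis unfolding g_def c_def by simp
  qed
  have int: "set_integrable lborel {g (-1)..g x} f"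
    unfolding g0 g1 f_def using integrable_Beta[of a "1/2"] a by simp
  have deriv: "(g has_real_derivative g' t) (at t)" if "t \<in> {-1..x}" for t
  proof -
    have "3-2*t \<noteq> 0" using that x by auto
    then show ?thesis unfolding g_def g'_def
      by (auto intro!: derivative_eq_intros simp: field_simps power2_eq_square)
  qed
  have contg': "continuous_on {-1..x} g'"
    unfolding g'_def using x by (intro continuous_intros) auto
  have nonneg: "g' t \<ge> 0" if "t \<in> {-1..x}" for t
    unfolding g'_def using cp by simp
  note sub = integral_substitution(2)[OF int deriv contg' nonneg] 
  have L: "(LBINT u. f u * indicator {g (-1)..g x} u) = Beta a (1/2)"
  proof -
    have "(LBINT u. f u * indicator {g (-1)..g x} u) = (LINT u:{0..1}|lborel. f u)"
      unfolding g0 g1 set_lebesgue_integral_def by (simp add: mult.commute)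
    also have "\<dots> = integral {0..1} f"
      using int unfolding g0 g1 by (rule set_borel_integral_eq_integral(2))
    also have "\<dots> = Beta a (1/2)"
      unfolding f_def using has_integral_Beta_real[of a "1/2"] a by (simp add: integral_unique)
    finally show ?thesis .
  qed
  have pw: "f (g t) * g' t * indicator {-1..x} t = K * (indicator {-1..x} t *\<^sub>R F t)" for t
  proof (cases "t \<in> {-1..x}")
    case False then show ?thesis by simp
  next
    case True
    show ?thesis
    proof (cases "t = -1")
      case True then show ?thesis unfolding f_def g_def F_def using x by simp
    next
      case f1: False
      show ?thesis
      proof (cases "t = x")
        case True
        have "g t = 1" using g1 True by simp
        then show ?thesis using True x unfolding f_def F_def by simp
      next
        case False
        then have tt: "-1 < t" "t < x" using f1 \<open>t \<in> {-1..x}\<close> by auto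
        show ?thesis using True pt[OF x tt c_def, of a] unfolding f_def g_def g'_def F_def K_def
          by simp
      qed
    qed
  qed
  have R: "(LBINT t. f (g t) * g' t * indicator {-1..x} t) = K * (LINT t:{-1..x}|lborel. F t)"
    unfolding pw set_lebesgue_integral_def by (rule integral_mult_right_zero)
  have "Beta a (1/2) = K * (LINT t:{-1..x}|lborel. F t)" using sub L R x by simp
  then have "(LINT t:{-1..x}|lborel. F t) = Beta a (1/2) / K" using Kp by (simp add: field_simps)
  then show ?thesis unfolding F_def K_def c_def .
qed

lemma alg2:
  fixes E B Ca Xa s5 sx sp Ga Gg P :: real
  assumes "Gg \<noteq> 0" "Ca > 0" "s5 > 0" "sx > 0" "Xa > 0" "E * Xa = P * sx" "B = Ga * sp / Gg"
  shows "E * (B / (Ca / Xa * s5 * sx)) = sp / s5 * (Ga / Gg) * P * (1 / Ca)"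
proof -
  have "E = P * sx / Xa" using assms by (simp add: field_simps)
  then show ?thesis using assms by (simp add: field_simps)
qed

lemma part1:
  fixes m :: nat and \<gamma> x :: real
  assumes g: "\<gamma> \<ge> real m + 3/2" and x: "-1 \<le> x" "x \<le> 1"
  shows "Iplus (\<gamma> - real m - 3/2) (g_fun m \<gamma>) x =
             sqrt (pi / 5) * (Gamma (\<gamma> - 1/2) / Gamma \<gamma>) *
             (x + 1) ^ (m + 1) * (3 - 2 * x) powr (- (\<gamma> - 1/2))"
proof (cases "x = -1")
  case True then show ?thesis by (simp add: Iplus_def)
next
  case False
  then have x': "-1 < x" using x by simp
  define a where "a = \<gamma> - 1/2"
  define mu where "mu = \<gamma> - real m - 3/2"
  have a: "a > 0" "a \<ge> 1" using g unfolding a_def by auto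
  have ga: "\<gamma> = a + 1/2" unfolding a_def by simp
  have cong: "(x - t) powr (-1/2) * (1 + t) powr mu * g_fun m \<gamma> t
     = (x-t) powr (-1/2) * (1+t) powr (a-1) * (3-2*t) powr (-(a+1/2))" if "t \<in> {-1..x}" for t
  proof (cases "t = -1")
    case True then show ?thesis by simp
  next
    case False
    then have tp: "1 + t > 0" using that by auto
    have "(1 + t) powr mu * (t+1)^m = (1+t) powr (mu + real m)"
      using tp by (simp add: powr_add powr_realpow add.commute)
    also have "mu + real m = a - 1" unfolding mu_def a_def by simp
    finally show ?thesis unfolding g_fun_def ga by (simp add: mult.assoc)
  qed
  have I: "Iplus mu (g_fun m \<gamma>) x = (1+x) powr (-mu+1/2) *
      (Beta a (1/2) / (((3-2*x)/(1+x)) powr a * sqrt 5 * sqrt (1+x)))"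
  proof -
    have IE: "(LINT t:{-1..x}|lborel. (x - t) powr (-1/2) * (1 + t) powr mu * g_fun m \<gamma> t)
      = (LINT t:{-1..x}|lborel. (x-t) powr (-1/2) * (1+t) powr (a-1) * (3-2*t) powr (-(a+1/2)))"
      by (rule set_lebesgue_integral_cong) (use cong in auto)
    show ?thesis unfolding Iplus_def IE core[OF a(1) x' x(2)] ..
  qed
  have Bt: "Beta a (1/2) = Gamma a * sqrt pi / Gamma \<gamma>"
    unfolding Beta_def ga by (simp add: Gamma_one_half_real)
  have xp: "1 + x > 0" "3 - 2*x > 0" using x' x by auto
  have E: "(1+x) powr (-mu+1/2) * (1+x) powr a = (x+1)^(m+1) * sqrt(1+x)"
  proof -
    have "(1+x) powr (-mu+1/2) * (1+x) powr a = (1+x) powr (-mu+1/2+a)" by (simp add: powr_add)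
    also have "-mu+1/2+a = real (m+1) + 1/2" unfolding mu_def a_def by simp
    also have "(1+x) powr (real (m+1) + 1/2) = (x+1)^(m+1) * sqrt(1+x)"
      using xp by (simp only: powr_add powr_realpow powr_half_sqrt less_imp_le add.commute)
    finally show ?thesis .
  qed
  have Cq: "((3-2*x)/(1+x)) powr a = (3-2*x) powr a / (1+x) powr a" using xp by (simp add: powr_divide)
  have R: "(3 - 2 * x) powr (- a) = 1 / (3-2*x) powr a"
    using xp by (simp add: powr_minus divide_inverse)
  have sp: "sqrt (pi/5) = sqrt pi / sqrt 5" by (simp add: real_sqrt_divide)
  have Gg: "Gamma \<gamma> \<noteq> 0"
  proof -
    have "\<gamma> > 0" using g by simp
    then have "Gamma \<gamma> > 0" by (rule Gamma_real_pos)
    then show ?thesis by simp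
  qed
  show ?thesis
    unfolding mu_def[symmetric] a_def[symmetric] I Cq R sp
    by (rule alg2[OF Gg _ _ _ _ E Bt]) (use xp in auto)
qed

theorem mainTheorem11:
  fixes m :: nat and \<gamma> :: real
  assumes "\<gamma> \<ge> real m + 3/2"
  shows "(\<forall>x\<in>{-1..1::real}.
           Iplus (\<gamma> - real m - 3/2) (g_fun m \<gamma>) x =
             sqrt (pi / 5) * (Gamma (\<gamma> - 1/2) / Gamma \<gamma>) *
             (x + 1) ^ (m + 1) * (3 - 2 * x) powr (- (\<gamma> - 1/2)))
       \<and> (\<forall>lam::real. lam \<ge> 0 \<longrightarrow> (\<forall>x\<in>{-1..1::real}.
           Iplus lam (phi_fun (2 * lam + 3)) x =
             sqrt (pi / 5) * (Gamma (lam + 1) / Gamma (lam + 3/2)) *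
             (x + 1) * (3 - 2 * x) powr (- (lam + 1))))"
proof (intro conjI ballI allI impI)
  fix x :: real assume "x \<in> {-1..1}"
  then show "Iplus (\<gamma> - real m - 3/2) (g_fun m \<gamma>) x =
             sqrt (pi / 5) * (Gamma (\<gamma> - 1/2) / Gamma \<gamma>) *
             (x + 1) ^ (m + 1) * (3 - 2 * x) powr (- (\<gamma> - 1/2))"
    using part1[OF assms] by auto
next
  fix lam x :: real assume l: "lam \<ge> 0" and x: "x \<in> {-1..1}"
  have ph: "phi_fun (2 * lam + 3) = g_fun 0 (lam + 3/2)"
  proof -
    have e: "- (2*lam+3)/2 = - (lam + 3/2)" by simp
    show ?thesis by (rule ext) (simp only: phi_fun_def g_fun_def e power_0 mult_1_left)
  qed
  have "Iplus (lam + 3/2 - real 0 - 3/2) (g_fun 0 (lam + 3/2)) x =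
             sqrt (pi / 5) * (Gamma (lam + 3/2 - 1/2) / Gamma (lam + 3/2)) *
             (x + 1) ^ (0 + 1) * (3 - 2 * x) powr (- (lam + 3/2 - 1/2))"
    using part1[of 0 "lam + 3/2" x] l x by auto
  moreover have "lam + 3/2 - 1/2 = lam + 1" by simp
  ultimately show "Iplus lam (phi_fun (2 * lam + 3)) x =
             sqrt (pi / 5) * (Gamma (lam + 1) / Gamma (lam + 3/2)) *
             (x + 1) * (3 - 2 * x) powr (- (lam + 1))"
    unfolding ph by simp
qed

end
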